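(* Let $d>k\geq1$, $\varepsilon\in(0,1)$, let $A\in\mathbb{R}^{d\times d}$ be symmetric positive semidefinite with $\lambda_k>\lambda_{k+1}$, $\beta>0$ with $\lambda_k>2\sqrt\beta\geq\lambda_{k+1}$, $X_0\in\mathrm{St}(d,k)$ with $\cos\theta_k(U_k,X_0)>0$, and consider ANPM with perturbations satisfying for all $t\geq0$: $\|U_{-k}^\top\Xi_t\|_2\leq c(\lambda_k-2\sqrt\beta)\varepsilon$ and $\|U_k^\top\Xi_t\|_2\leq c(\lambda_k-2\sqrt\beta)\cos\theta_k(U_k,X_t)$, $c=1/32$. Then for all $t\geq1$, $$H_{t+1}C_{t+1}=\Lambda_{-k}H_tC_t-\beta H_{t-1}C_{t-1}+\Psi_tC_t,$$ and $H_1C_1=\tfrac12\Lambda_{-k}H_0C_0+\Psi_0C_0$.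
   Context: $A$ has eigenvalues $\lambda_1\geq\dots\geq\lambda_d\geq0$, orthonormal eigenvectors $u_i$; $U_k:=[u_1..u_k]$, $U_{-k}:=[u_{k+1}..u_d]$, $\Lambda_k:=\mathrm{diag}(\lambda_1..\lambda_k)$, $\Lambda_{-k}:=\mathrm{diag}(\lambda_{k+1}..\lambda_d)$. QR: $Y=XR$, $X^\top X=I_k$, $R$ upper triangular with nonnegative diagonal; $\theta_k(U,X):=\arccos\sigma_{\min}(U^\top X)$. ANPM: $(X_1,R_1)=\mathrm{QR}(\tfrac12AX_0+\Xi_0)$; for $t\geq1$, $Y_{t+1}=AX_t-\beta X_{t-1}R_t^{-1}+\Xi_t$, $(X_{t+1},R_{t+1})=\mathrm{QR}(Y_{t+1})$. $H_t:=(U_{-k}^\top X_t)(U_k^\top X_t)^{-1}$; $\Psi_t:=(U_{-k}^\top\Xi_t)(U_k^\top X_t)^{-1}$; $E_t:=\Lambda_k^{-1}(U_k^\top\Xi_t)(U_k^\top X_t)^{-1}$; $G_0:=(I_k/2+E_0)^{-1}$, $G_{t+1}:=(I_k-\beta\Lambda_k^{-1}G_t\Lambda_k^{-1}+E_{t+1})^{-1}$; $C_0:=I_k$ and $C_t:=\Lambda_kG_{t-1}^{-1}\Lambda_kG_{t-2}^{-1}\cdots\Lambda_kG_0^{-1}$ for $t\geq1$. *)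

theory Defs
  imports "Jordan_Normal_Form.Matrix"
begin

(* Matrix inverse (junk value 0 for singular matrices). *)
definition minv :: "real mat \<Rightarrow> real mat" where
  "minv M = (if invertible_mat M then (SOME B. inverts_mat M B \<and> inverts_mat B M)
             else 0\<^sub>m (dim_col M) (dim_row M))"

definition vnorm :: "real vec \<Rightarrow> real" where
  "vnorm x = sqrt (x \<bullet> x)"

definition spec_norm :: "real mat \<Rightarrow> real" where
  "spec_norm M = Sup (insert 0 {vnorm (M *\<^sub>v x) | x. x \<in> carrier_vec (dim_col M) \<and> vnorm x = 1})"

definition sigma_min :: "real mat \<Rightarrow> real" where
  "sigma_min M = Inf {vnorm (M *\<^sub>v x) | x. x \<in> carrier_vec (dim_col M) \<and> vnorm x = 1}"

definition theta :: "real mat \<Rightarrow> real mat \<Rightarrow> real" where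
  "theta U X = arccos (sigma_min (transpose_mat U * X))"

definition diagm :: "nat \<Rightarrow> (nat \<Rightarrow> real) \<Rightarrow> real mat" where
  "diagm n f = mat n n (\<lambda>(i,j). if i = j then f i else 0)"

definition Ufirst :: "nat \<Rightarrow> real mat \<Rightarrow> real mat" where
  "Ufirst k U = mat (dim_row U) k (\<lambda>(i,j). U $$ (i, j))"

definition Urest :: "nat \<Rightarrow> real mat \<Rightarrow> real mat" where
  "Urest k U = mat (dim_row U) (dim_col U - k) (\<lambda>(i,j). U $$ (i, k + j))"

(* Lambda_k = diag(lambda_1..lambda_k), Lambda_{-k} = diag(lambda_{k+1}..lambda_d);
   eigenvalues are indexed from 0, i.e. lam i = lambda_{i+1} *)
definition Lam_first :: "nat \<Rightarrow> (nat \<Rightarrow> real) \<Rightarrow> real mat" where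
  "Lam_first k lam = diagm k lam"

definition Lam_rest :: "nat \<Rightarrow> nat \<Rightarrow> (nat \<Rightarrow> real) \<Rightarrow> real mat" where
  "Lam_rest d k lam = diagm (d - k) (\<lambda>i. lam (k + i))"

definition is_QR :: "nat \<Rightarrow> real mat \<Rightarrow> real mat \<Rightarrow> real mat \<Rightarrow> bool" where
  "is_QR k Y X R \<longleftrightarrow> X \<in> carrier_mat (dim_row Y) k \<and> R \<in> carrier_mat k k \<and>
     Y = X * R \<and> transpose_mat X * X = 1\<^sub>m k \<and>
     (\<forall>i<k. \<forall>j<i. R $$ (i, j) = 0) \<and> (\<forall>i<k. R $$ (i, i) \<ge> 0)"

definition stiefel :: "nat \<Rightarrow> nat \<Rightarrow> real mat set" where
  "stiefel d k = {X. X \<in> carrier_mat d k \<and> transpose_mat X * X = 1\<^sub>m k}"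

definition Hm :: "nat \<Rightarrow> real mat \<Rightarrow> real mat \<Rightarrow> real mat" where
  "Hm k U X = (transpose_mat (Urest k U) * X) * minv (transpose_mat (Ufirst k U) * X)"

definition Psim :: "nat \<Rightarrow> real mat \<Rightarrow> real mat \<Rightarrow> real mat \<Rightarrow> real mat" where
  "Psim k U Xi X = (transpose_mat (Urest k U) * Xi) * minv (transpose_mat (Ufirst k U) * X)"

definition Em :: "nat \<Rightarrow> real mat \<Rightarrow> (nat \<Rightarrow> real) \<Rightarrow> real mat \<Rightarrow> real mat \<Rightarrow> real mat" where
  "Em k U lam Xi X = minv (Lam_first k lam) * (transpose_mat (Ufirst k U) * Xi)
                      * minv (transpose_mat (Ufirst k U) * X)"

fun Gm :: "nat \<Rightarrow> (nat \<Rightarrow> real) \<Rightarrow> real \<Rightarrow> (nat \<Rightarrow> real mat) \<Rightarrow> nat \<Rightarrow> real mat" where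
  "Gm k lam \<beta> E 0 = minv ((1/2) \<cdot>\<^sub>m 1\<^sub>m k + E 0)"
| "Gm k lam \<beta> E (Suc t) = minv (1\<^sub>m k - \<beta> \<cdot>\<^sub>m (minv (Lam_first k lam) * Gm k lam \<beta> E t
                                  * minv (Lam_first k lam)) + E (Suc t))"

fun Cm :: "nat \<Rightarrow> (nat \<Rightarrow> real) \<Rightarrow> real \<Rightarrow> (nat \<Rightarrow> real mat) \<Rightarrow> nat \<Rightarrow> real mat" where
  "Cm k lam \<beta> E 0 = 1\<^sub>m k"
| "Cm k lam \<beta> E (Suc t) = Lam_first k lam * minv (Gm k lam \<beta> E t) * Cm k lam \<beta> E t"

end

theory Submission
  imports Defs "Jordan_Normal_Form.Determinant" "HOL-Analysis.L2_Norm"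
begin


lemma vnorm_L2: "vnorm x = L2_set (\<lambda>i. x $ i) {0..<dim_vec x}"
  unfolding vnorm_def L2_set_def scalar_prod_def by (simp add: power2_eq_square)

lemma vnorm_nonneg[simp]: "vnorm x \<ge> 0"
  by (simp add: vnorm_L2)

lemma vnorm_add: assumes "dim_vec u = dim_vec v" shows "vnorm (u + v) \<le> vnorm u + vnorm v"
proof -
  have "vnorm (u + v) = L2_set (\<lambda>i. u $ i + v $ i) {0..<dim_vec v}"
    unfolding vnorm_L2 using assms by (intro L2_set_cong) auto
  also have "\<dots> \<le> vnorm u + vnorm v" unfolding vnorm_L2 using assms by (simp add: L2_set_triangle_ineq)
  finally show ?thesis .
qed

lemma vnorm_smult: "vnorm (c \<cdot>\<^sub>v v) = \<bar>c\<bar> * vnorm v"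
proof -
  have "vnorm (c \<cdot>\<^sub>v v) = L2_set (\<lambda>i. \<bar>c\<bar> * \<bar>v $ i\<bar>) {0..<dim_vec v}"
    unfolding vnorm_L2 unfolding L2_set_def by (intro arg_cong[where f=sqrt] sum.cong) (auto simp: power_mult_distrib)
  also have "\<dots> = \<bar>c\<bar> * vnorm v" unfolding vnorm_L2 
    by (subst L2_set_right_distrib[symmetric]) (auto simp: L2_set_def)
  finally show ?thesis .
qed


lemma vnorm_diff: assumes "dim_vec u = dim_vec v" shows "vnorm u - vnorm v \<le> vnorm (u - v)"
proof -
  have "u = (u - v) + v" using assms by auto
  then have "vnorm u \<le> vnorm (u - v) + vnorm v" using vnorm_add[of "u - v" v] assms by (metis index_minus_vec(2))
  then show ?thesis by simp
qed

lemma vnorm_eq0: "vnorm v = 0 \<Longrightarrow> v = 0\<^sub>v (dim_vec v)"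
proof -
  assume "vnorm v = 0"
  then have "\<forall>i\<in>{0..<dim_vec v}. v $ i = 0" unfolding vnorm_L2 by (subst (asm) L2_set_eq_0_iff) auto
  then show ?thesis by (intro eq_vecI) auto
qed

lemma vnorm_comp: "i < dim_vec v \<Longrightarrow> \<bar>v $ i\<bar> \<le> vnorm v"
proof -
  assume i: "i < dim_vec v"
  have "\<bar>v $ i\<bar> \<le> L2_set (\<lambda>i. \<bar>v $ i\<bar>) {0..<dim_vec v}" by (rule member_le_L2_set) (use i in auto)
  also have "\<dots> = vnorm v" unfolding vnorm_L2 L2_set_def by simp
  finally show ?thesis .
qed

lemma vnorm_le_sum_abs: "vnorm v \<le> (\<Sum>i\<in>{0..<dim_vec v}. \<bar>v $ i\<bar>)"
  unfolding vnorm_L2 by (rule L2_set_le_sum_abs)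


definition nb :: "real mat \<Rightarrow> real \<Rightarrow> bool" where
  "nb M c \<longleftrightarrow> (\<forall>x\<in>carrier_vec (dim_col M). vnorm (M *\<^sub>v x) \<le> c * vnorm x)"

lemma nbD: "nb M c \<Longrightarrow> x \<in> carrier_vec (dim_col M) \<Longrightarrow> vnorm (M *\<^sub>v x) \<le> c * vnorm x"
  unfolding nb_def by auto

lemma vnorm_minus_le: assumes "dim_vec u = dim_vec v" shows "vnorm (u - v) \<le> vnorm u + vnorm v"
proof -
  have "vnorm (u - v) = L2_set (\<lambda>i. u $ i + (- v $ i)) {0..<dim_vec v}"
    unfolding vnorm_L2 using assms by (intro L2_set_cong) auto
  also have "\<dots> \<le> L2_set (\<lambda>i. u $ i) {0..<dim_vec v} + L2_set (\<lambda>i. - v $ i) {0..<dim_vec v}"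
    by (rule L2_set_triangle_ineq)
  also have "\<dots> = vnorm u + vnorm v" unfolding vnorm_L2 L2_set_def using assms by simp
  finally show ?thesis .
qed

lemma nb_mult: assumes A: "A \<in> carrier_mat n m" and B: "B \<in> carrier_mat m p"
  and "nb A a" "nb B b" "a \<ge> 0" shows "nb (A * B) (a * b)"
  unfolding nb_def
proof
  fix x :: "real vec" assume x: "x \<in> carrier_vec (dim_col (A * B))"
  then have x': "x \<in> carrier_vec p" using B by auto
  have "vnorm ((A * B) *\<^sub>v x) = vnorm (A *\<^sub>v (B *\<^sub>v x))" using A B x' by simp
  also have "\<dots> \<le> a * vnorm (B *\<^sub>v x)" using assms(3) B A x' by (intro nbD) auto
  also have "\<dots> \<le> a * (b * vnorm x)" using assms(4,5) B x' by (intro mult_left_mono nbD) auto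
  finally show "vnorm ((A * B) *\<^sub>v x) \<le> a * b * vnorm x" by simp
qed

lemma nb_add: assumes A: "A \<in> carrier_mat n m" and B: "B \<in> carrier_mat n m"
  and "nb A a" "nb B b" shows "nb (A + B) (a + b)"
  unfolding nb_def
proof
  fix x :: "real vec" assume x: "x \<in> carrier_vec (dim_col (A + B))"
  then have x': "x \<in> carrier_vec m" using B by auto
  have "vnorm ((A + B) *\<^sub>v x) = vnorm (A *\<^sub>v x + B *\<^sub>v x)" using A B x' by (simp add: add_mult_distrib_mat_vec)
  also have "\<dots> \<le> vnorm (A *\<^sub>v x) + vnorm (B *\<^sub>v x)" using A B by (intro vnorm_add) auto
  also have "\<dots> \<le> a * vnorm x + b * vnorm x" using assms A B x' by (intro add_mono nbD) auto
  finally show "vnorm ((A + B) *\<^sub>v x) \<le> (a + b) * vnorm x" by (simp add: algebra_simps)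
qed

lemma nb_minus: assumes A: "A \<in> carrier_mat n m" and B: "B \<in> carrier_mat n m"
  and "nb A a" "nb B b" shows "nb (A - B) (a + b)"
  unfolding nb_def
proof
  fix x :: "real vec" assume x: "x \<in> carrier_vec (dim_col (A - B))"
  then have x': "x \<in> carrier_vec m" using B by auto
  have "vnorm ((A - B) *\<^sub>v x) = vnorm (A *\<^sub>v x - B *\<^sub>v x)" using A B x' by (simp add: minus_mult_distrib_mat_vec)
  also have "\<dots> \<le> vnorm (A *\<^sub>v x) + vnorm (B *\<^sub>v x)" using A B by (intro vnorm_minus_le) auto
  also have "\<dots> \<le> a * vnorm x + b * vnorm x" using assms A B x' by (intro add_mono nbD) auto
  finally show "vnorm ((A - B) *\<^sub>v x) \<le> (a + b) * vnorm x" by (simp add: algebra_simps)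
qed

lemma nb_smult: assumes A: "A \<in> carrier_mat n m" and "nb A a" "a \<ge> 0" shows "nb (c \<cdot>\<^sub>m A) (\<bar>c\<bar> * a)"
  unfolding nb_def
proof
  fix x :: "real vec" assume x: "x \<in> carrier_vec (dim_col (c \<cdot>\<^sub>m A))"
  then have x': "x \<in> carrier_vec m" using A by auto
  have "(c \<cdot>\<^sub>m A) *\<^sub>v x = c \<cdot>\<^sub>v (A *\<^sub>v x)" using A x' by (intro eq_vecI) (auto simp: scalar_prod_def sum_distrib_left ac_simps)
  then have "vnorm ((c \<cdot>\<^sub>m A) *\<^sub>v x) = \<bar>c\<bar> * vnorm (A *\<^sub>v x)" by (simp add: vnorm_smult)
  also have "\<dots> \<le> \<bar>c\<bar> * (a * vnorm x)" using assms A x' by (intro mult_left_mono nbD) auto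
  finally show "vnorm ((c \<cdot>\<^sub>m A) *\<^sub>v x) \<le> \<bar>c\<bar> * a * vnorm x" by simp
qed

lemma nb_mono: "nb A a \<Longrightarrow> a \<le> b \<Longrightarrow> nb A b"
  unfolding nb_def by (meson mult_right_mono order_trans vnorm_nonneg)

lemma nb_one: "nb (1\<^sub>m n) 1"
  unfolding nb_def by auto

lemma nb_diag: assumes "\<forall>i<n. \<bar>f i\<bar> \<le> c" and c: "c \<ge> 0" shows "nb (diagm n f) c"
  unfolding nb_def
proof
  fix x :: "real vec" assume x: "x \<in> carrier_vec (dim_col (diagm n f))"
  then have xn: "dim_vec x = n" by (auto simp: diagm_def)
  have "diagm n f *\<^sub>v x = vec n (\<lambda>i. f i * x $ i)"
  proof (intro eq_vecI)
    fix i assume i: "i < dim_vec (vec n (\<lambda>i. f i * x $ i))"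
    then have "row (diagm n f) i \<bullet> x = (\<Sum>j\<in>{0..<n}. (if i = j then f i else 0) * x $ j)"
      using xn by (auto simp: diagm_def scalar_prod_def intro!: sum.cong)
    also have "\<dots> = (\<Sum>j\<in>{0..<n}. if i = j then f i * x $ j else 0)" by (intro sum.cong) auto
    also have "\<dots> = f i * x $ i" using i by (simp add: sum.delta)
    finally show "(diagm n f *\<^sub>v x) $ i = vec n (\<lambda>i. f i * x $ i) $ i" using i by (auto simp: diagm_def)
  qed (auto simp: diagm_def)
  then have "vnorm (diagm n f *\<^sub>v x) = L2_set (\<lambda>i. f i * x $ i) {0..<n}" by (auto simp: vnorm_L2 intro!: L2_set_cong)
  also have "\<dots> \<le> L2_set (\<lambda>i. c * x $ i) {0..<n}"
    unfolding L2_set_def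
  proof (intro real_sqrt_le_mono sum_mono)
    fix i assume "i \<in> {0..<n}"
    then have "\<bar>f i\<bar> \<le> c" using assms by auto
    then have "\<bar>f i * x $ i\<bar> \<le> \<bar>c * x $ i\<bar>" by (simp add: abs_mult mult_right_mono)
    then show "(f i * x $ i)\<^sup>2 \<le> (c * x $ i)\<^sup>2" using abs_le_square_iff by blast
  qed
  also have "\<dots> = c * vnorm x" 
  proof -
    show ?thesis unfolding vnorm_L2 xn using L2_set_right_distrib[OF c, of "\<lambda>i. x $ i"] by simp
  qed
  finally show "vnorm (diagm n f *\<^sub>v x) \<le> c * vnorm x" .
qed


lemma vnorm_uminus: "vnorm (- v) = vnorm v"
proof -
  have "- v = (-1) \<cdot>\<^sub>v v" by (intro eq_vecI) auto
  then show ?thesis by (simp add: vnorm_smult)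
qed

lemma minv_props: assumes inv: "invertible_mat M" and M: "M \<in> carrier_mat n n"
  shows "minv M \<in> carrier_mat n n" "M * minv M = 1\<^sub>m n" "minv M * M = 1\<^sub>m n"
proof -
  have ex: "\<exists>B. inverts_mat M B \<and> inverts_mat B M" using inv unfolding invertible_mat_def by auto
  define B where "B = (SOME B. inverts_mat M B \<and> inverts_mat B M)"
  have B: "inverts_mat M B \<and> inverts_mat B M" unfolding B_def by (rule someI_ex[OF ex])
  have mB: "minv M = B" unfolding minv_def B_def using inv by simp
  have 1: "M * B = 1\<^sub>m n" using B M unfolding inverts_mat_def by auto
  have 2: "B * M = 1\<^sub>m (dim_row B)" using B unfolding inverts_mat_def by auto
  have "dim_col B = n" using arg_cong[OF 1, of dim_col] by simp
  moreover have "dim_row B = n" using arg_cong[OF 2, of dim_col] M by simp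
  ultimately show "minv M \<in> carrier_mat n n" using mB by auto
  show "M * minv M = 1\<^sub>m n" using 1 mB by simp
  show "minv M * M = 1\<^sub>m n" using 2 mB \<open>dim_row B = n\<close> by simp
qed

lemma inv_unique: fixes M B :: "real mat" assumes M: "M \<in> carrier_mat n n" and B: "B \<in> carrier_mat n n" and MB: "M * B = 1\<^sub>m n"
  shows "invertible_mat M" "minv M = B"
proof -
  have BM: "B * M = 1\<^sub>m n" by (rule mat_mult_left_right_inverse[OF M B MB])
  show inv: "invertible_mat M" unfolding invertible_mat_def inverts_mat_def square_mat.simps
    using M B MB BM by auto
  note mp = minv_props[OF inv M]
  have "(minv M * M) * B = minv M * (M * B)" by (rule assoc_mult_mat) (use mp M B in auto)
  then show "minv M = B" using mp MB B M by (simp add: left_mult_one_mat right_mult_one_mat)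
qed

lemma minv_minv: assumes inv: "invertible_mat M" and M: "M \<in> carrier_mat n n"
  shows "invertible_mat (minv M)" "minv (minv M) = M"
  using inv_unique[OF minv_props(1)[OF inv M] M minv_props(3)[OF inv M]] by auto

lemma invertible_mult: fixes A B :: "real mat" assumes A: "A \<in> carrier_mat n n" and B: "B \<in> carrier_mat n n"
  and iA: "invertible_mat A" and iB: "invertible_mat B"
  shows "invertible_mat (A * B)"
proof -
  note a = minv_props[OF iA A] and b = minv_props[OF iB B]
  have "B * (minv B * minv A) = (B * minv B) * minv A" by (rule assoc_mult_mat[symmetric]) (use A B a b in auto)
  also have "\<dots> = minv A" using a b by simp
  finally have 1: "B * (minv B * minv A) = minv A" .
  have "(A * B) * (minv B * minv A) = A * (B * (minv B * minv A))"
    by (rule assoc_mult_mat) (use A B a b in auto)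
  also have "\<dots> = 1\<^sub>m n" using 1 a by simp
  finally show ?thesis using inv_unique(1)[of "A * B" n "minv B * minv A"] A B a b by auto
qed

lemma invertible_factor: fixes A B :: "real mat" assumes A: "A \<in> carrier_mat n n" and B: "B \<in> carrier_mat n n"
  and i: "invertible_mat (A * B)"
  shows "invertible_mat A" "invertible_mat B"
proof -
  have AB: "A * B \<in> carrier_mat n n" using A B by auto
  note c = minv_props[OF i AB]
  have "A * (B * minv (A * B)) = (A * B) * minv (A * B)" by (rule assoc_mult_mat[symmetric]) (use A B c in auto)
  then have h1: "A * (B * minv (A * B)) = 1\<^sub>m n" using c by simp
  show "invertible_mat A" using inv_unique(1)[OF A _ h1] B c by auto
  have "(minv (A * B) * A) * B = 1\<^sub>m n" using A B c by simp
  then have h2: "B * (minv (A * B) * A) = 1\<^sub>m n" using mat_mult_left_right_inverse[of "minv (A * B) * A" n B] A B c by auto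
  show "invertible_mat B" using inv_unique(1)[OF B _ h2] A c by auto
qed

lemma inj_invertible: fixes M :: "real mat" assumes M: "M \<in> carrier_mat n n"
  and inj: "\<And>v. v \<in> carrier_vec n \<Longrightarrow> M *\<^sub>v v = 0\<^sub>v n \<Longrightarrow> v = 0\<^sub>v n"
  shows "invertible_mat M"
proof -
  have "det M \<noteq> 0" using det_0_iff_vec_prod_zero[OF M] inj by auto
  from det_non_zero_imp_unit[OF M this, of "()"]
  obtain B where "B \<in> carrier_mat n n" "M * B = 1\<^sub>m n"
    unfolding Units_def ring_mat_def by auto
  then show ?thesis using inv_unique(1) M by blast
qed

lemma smult_one_mult_vec: fixes x :: "real vec" shows "x \<in> carrier_vec n \<Longrightarrow> (a \<cdot>\<^sub>m 1\<^sub>m n) *\<^sub>v x = a \<cdot>\<^sub>v x"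
proof -
  assume x: "x \<in> carrier_vec n"
  have "a \<cdot>\<^sub>v x = a \<cdot>\<^sub>v (1\<^sub>m n *\<^sub>v x)" using x by auto
  also have "\<dots> = (a \<cdot>\<^sub>m 1\<^sub>m n) *\<^sub>v x" using x by auto
  finally show ?thesis by simp
qed

lemma nb_inv: fixes M :: "real mat" assumes M: "M \<in> carrier_mat n n" and nbq: "nb (M - a \<cdot>\<^sub>m 1\<^sub>m n) q"
  and q: "0 \<le> q" "q < a"
  shows "invertible_mat M" "nb (minv M) (1 / (a - q))"
proof -
  have low: "(a - q) * vnorm x \<le> vnorm (M *\<^sub>v x)" if x: "x \<in> carrier_vec n" for x
  proof -
    have "(M - a \<cdot>\<^sub>m 1\<^sub>m n) *\<^sub>v x = M *\<^sub>v x - (a \<cdot>\<^sub>m 1\<^sub>m n) *\<^sub>v x"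
      by (rule minus_mult_distrib_mat_vec) (use M x in auto)
    then have e: "(M - a \<cdot>\<^sub>m 1\<^sub>m n) *\<^sub>v x = M *\<^sub>v x - a \<cdot>\<^sub>v x"
      by (simp only: smult_one_mult_vec[OF x])
    have "vnorm (a \<cdot>\<^sub>v x) - vnorm (M *\<^sub>v x) \<le> vnorm (a \<cdot>\<^sub>v x - M *\<^sub>v x)"
      using M x by (intro vnorm_diff) auto
    also have "a \<cdot>\<^sub>v x - M *\<^sub>v x = - (M *\<^sub>v x - a \<cdot>\<^sub>v x)" using M x by (intro eq_vecI) auto
    also have "vnorm \<dots> \<le> q * vnorm x" unfolding vnorm_uminus e[symmetric]
      using nbq M x by (intro nbD) auto
    finally have "\<bar>a\<bar> * vnorm x - vnorm (M *\<^sub>v x) \<le> q * vnorm x" by (simp add: vnorm_smult)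
    then show ?thesis using q by (simp add: left_diff_distrib)
  qed
  show inv: "invertible_mat M"
  proof (rule inj_invertible[OF M])
    fix v assume v: "v \<in> carrier_vec n" "M *\<^sub>v v = 0\<^sub>v n"
    have z: "vnorm (0\<^sub>v n) = 0" by (simp add: vnorm_def)
    have "(a - q) * vnorm v \<le> 0" using low[OF v(1)] v(2) z by simp
    then have "vnorm v \<le> 0" using q by (simp add: mult_le_0_iff)
    then have "vnorm v = 0" using vnorm_nonneg[of v] by linarith
    then show "v = 0\<^sub>v n" using vnorm_eq0[of v] v(1) by (simp add: carrier_vecD)
  qed
  note mp = minv_props[OF inv M]
  show "nb (minv M) (1 / (a - q))" unfolding nb_def
  proof
    fix y :: "real vec" assume y: "y \<in> carrier_vec (dim_col (minv M))"
    then have y': "y \<in> carrier_vec n" using mp by auto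
    have "M *\<^sub>v (minv M *\<^sub>v y) = (M * minv M) *\<^sub>v y" by (rule assoc_mult_mat_vec[symmetric]) (use mp M y' in auto)
    then have "M *\<^sub>v (minv M *\<^sub>v y) = y" using mp y' by simp
    then have "(a - q) * vnorm (minv M *\<^sub>v y) \<le> vnorm y" using low[of "minv M *\<^sub>v y"] mp y' by auto
    then show "vnorm (minv M *\<^sub>v y) \<le> 1 / (a - q) * vnorm y" using q by (simp add: field_simps)
  qed
qed


lemma unit_scale: fixes x :: "real vec" assumes "vnorm x \<noteq> 0"
  shows "vnorm ((1 / vnorm x) \<cdot>\<^sub>v x) = 1"
  using assms by (simp add: vnorm_smult)

lemma mat_vec_smult: fixes M :: "real mat" assumes "x \<in> carrier_vec (dim_col M)"
  shows "M *\<^sub>v (c \<cdot>\<^sub>v x) = c \<cdot>\<^sub>v (M *\<^sub>v x)"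
  using assms by (intro mult_mat_vec[of M "dim_row M" "dim_col M"]) auto

lemma spec_bdd: fixes M :: "real mat"
  shows "bdd_above (insert 0 {vnorm (M *\<^sub>v x) | x. x \<in> carrier_vec (dim_col M) \<and> vnorm x = 1})"
proof -
  let ?K = "\<Sum>i\<in>{0..<dim_row M}. \<Sum>j\<in>{0..<dim_col M}. \<bar>M $$ (i, j)\<bar>"
  have "vnorm (M *\<^sub>v x) \<le> ?K" if x: "x \<in> carrier_vec (dim_col M)" "vnorm x = 1" for x
  proof -
    have "vnorm (M *\<^sub>v x) \<le> (\<Sum>i\<in>{0..<dim_row M}. \<bar>(M *\<^sub>v x) $ i\<bar>)"
      using vnorm_le_sum_abs[of "M *\<^sub>v x"] by simp
    also have "\<dots> \<le> ?K"
    proof (rule sum_mono)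
      fix i assume i: "i \<in> {0..<dim_row M}"
      have "\<bar>(M *\<^sub>v x) $ i\<bar> = \<bar>\<Sum>j\<in>{0..<dim_col M}. M $$ (i, j) * x $ j\<bar>"
        using i x by (auto simp: scalar_prod_def row_def)
      also have "\<dots> \<le> (\<Sum>j\<in>{0..<dim_col M}. \<bar>M $$ (i, j) * x $ j\<bar>)" by (rule sum_abs)
      also have "\<dots> \<le> (\<Sum>j\<in>{0..<dim_col M}. \<bar>M $$ (i, j)\<bar>)"
      proof (rule sum_mono)
        fix j assume j: "j \<in> {0..<dim_col M}"
        have "\<bar>x $ j\<bar> \<le> 1" using vnorm_comp[of j x] x j by auto
        then show "\<bar>M $$ (i, j) * x $ j\<bar> \<le> \<bar>M $$ (i, j)\<bar>"
          by (simp add: abs_mult mult_left_le)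
      qed
      finally show "\<bar>(M *\<^sub>v x) $ i\<bar> \<le> (\<Sum>j\<in>{0..<dim_col M}. \<bar>M $$ (i, j)\<bar>)" .
    qed
    finally show ?thesis .
  qed
  moreover have "0 \<le> ?K" by (intro sum_nonneg) auto
  ultimately show ?thesis unfolding bdd_above_def by blast
qed

lemma spec_norm_nb: fixes M :: "real mat" assumes "spec_norm M \<le> b" shows "nb M b"
  unfolding nb_def
proof
  fix x :: "real vec" assume x: "x \<in> carrier_vec (dim_col M)"
  show "vnorm (M *\<^sub>v x) \<le> b * vnorm x"
  proof (cases "vnorm x = 0")
    case True
    then have "x = 0\<^sub>v (dim_col M)" using vnorm_eq0[of x] x by auto
    then have "M *\<^sub>v x = 0\<^sub>v (dim_row M)" by auto
    then show ?thesis using True by (simp add: vnorm_def)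
  next
    case False
    let ?u = "(1 / vnorm x) \<cdot>\<^sub>v x"
    have u: "?u \<in> carrier_vec (dim_col M)" "vnorm ?u = 1" using x unit_scale[OF False] by auto
    have "vnorm (M *\<^sub>v ?u) \<le> spec_norm M" unfolding spec_norm_def
      by (rule cSup_upper[OF _ spec_bdd]) (use u in blast)
    also have "vnorm (M *\<^sub>v ?u) = vnorm (M *\<^sub>v x) / vnorm x"
      using mat_vec_smult[OF x] by (simp add: vnorm_smult)
    finally have "vnorm (M *\<^sub>v x) / vnorm x \<le> b" using assms by simp
    then show ?thesis using False vnorm_nonneg[of x] by (simp add: divide_le_eq mult.commute)
  qed
qed

lemma sigma_min_lower: fixes M :: "real mat" assumes x: "x \<in> carrier_vec (dim_col M)"
  shows "sigma_min M * vnorm x \<le> vnorm (M *\<^sub>v x)"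
proof (cases "vnorm x = 0")
  case True
  then show ?thesis by simp
next
  case False
  let ?u = "(1 / vnorm x) \<cdot>\<^sub>v x"
  have u: "?u \<in> carrier_vec (dim_col M)" "vnorm ?u = 1" using x unit_scale[OF False] by auto
  have "sigma_min M \<le> vnorm (M *\<^sub>v ?u)" unfolding sigma_min_def
    by (rule cInf_lower) (use u in \<open>auto intro: bdd_belowI[of _ 0]\<close>)
  also have "vnorm (M *\<^sub>v ?u) = vnorm (M *\<^sub>v x) / vnorm x"
    using mat_vec_smult[OF x] by (simp add: vnorm_smult)
  finally show ?thesis using False vnorm_nonneg[of x] by (simp add: le_divide_eq)
qed

lemma vnorm_unit: "i < n \<Longrightarrow> vnorm (unit_vec n i) = 1"
  by (simp add: vnorm_def)

lemma sigma_min_bounds: fixes M :: "real mat" assumes "dim_col M > 0" "nb M 1"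
  shows "0 \<le> sigma_min M" "sigma_min M \<le> 1"
proof -
  let ?e = "unit_vec (dim_col M) 0"
  have e: "?e \<in> carrier_vec (dim_col M)" "vnorm ?e = 1" using assms vnorm_unit by auto
  show "0 \<le> sigma_min M" unfolding sigma_min_def
    by (rule cInf_greatest) (use e in blast, auto)
  have "sigma_min M \<le> vnorm (M *\<^sub>v ?e)" unfolding sigma_min_def
    by (rule cInf_lower) (use e in \<open>auto intro: bdd_belowI[of _ 0]\<close>)
  also have "\<dots> \<le> 1" using nbD[OF assms(2) e(1)] e by simp
  finally show "sigma_min M \<le> 1" .
qed


lemma isometry: fixes X :: "real mat" assumes X: "X \<in> carrier_mat d k" and XX: "transpose_mat X * X = 1\<^sub>m k"
  and x: "x \<in> carrier_vec k" shows "vnorm (X *\<^sub>v x) = vnorm x"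
proof -
  have Xx: "X *\<^sub>v x \<in> carrier_vec d" using X x by auto
  have "transpose_mat X *\<^sub>v (X *\<^sub>v x) = (transpose_mat X * X) *\<^sub>v x"
    by (rule assoc_mult_mat_vec[symmetric]) (use X x in auto)
  also have "\<dots> = x" using XX x by simp
  finally have 1: "transpose_mat X *\<^sub>v (X *\<^sub>v x) = x" .
  have "(transpose_mat X *\<^sub>v (X *\<^sub>v x)) \<bullet> x = (X *\<^sub>v x) \<bullet> (X *\<^sub>v x)"
    by (rule transpose_vec_mult_scalar[OF X x Xx])
  then have "(X *\<^sub>v x) \<bullet> (X *\<^sub>v x) = x \<bullet> x" using 1 by simp
  then show ?thesis unfolding vnorm_def by simp
qed

lemma dims_simp[simp]: "dim_row (Ufirst k U) = dim_row U" "dim_col (Ufirst k U) = k"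
  "dim_row (Urest k U) = dim_row U" "dim_col (Urest k U) = dim_col U - k"
  "dim_row (Lam_first k lam) = k" "dim_col (Lam_first k lam) = k"
  "dim_row (Lam_rest d k lam) = d - k" "dim_col (Lam_rest d k lam) = d - k"
  "dim_row (diagm n f) = n" "dim_col (diagm n f) = n"
  by (auto simp: Ufirst_def Urest_def Lam_first_def Lam_rest_def diagm_def)

lemma Ufirst_carrier[simp]: "U \<in> carrier_mat d d \<Longrightarrow> Ufirst k U \<in> carrier_mat d k"
  by (auto simp: Ufirst_def)
lemma Urest_carrier[simp]: "U \<in> carrier_mat d d \<Longrightarrow> Urest k U \<in> carrier_mat d (d - k)"
  by (auto simp: Urest_def)
lemma Lam_first_carrier[simp]: "Lam_first k lam \<in> carrier_mat k k"
  by (auto simp: Lam_first_def diagm_def)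
lemma Lam_rest_carrier[simp]: "Lam_rest d k lam \<in> carrier_mat (d - k) (d - k)"
  by (auto simp: Lam_rest_def diagm_def)

lemma nb_UfirstT: fixes U :: "real mat" assumes U: "U \<in> carrier_mat d d" "transpose_mat U * U = 1\<^sub>m d"
  and k: "k \<le> d" shows "nb (transpose_mat (Ufirst k U)) 1"
  unfolding nb_def
proof
  fix v :: "real vec" assume v: "v \<in> carrier_vec (dim_col (transpose_mat (Ufirst k U)))"
  then have v': "v \<in> carrier_vec d" using U by auto
  have UUt: "U * transpose_mat U = 1\<^sub>m d"
    using mat_mult_left_right_inverse[of "transpose_mat U" d U] U by auto
  have iso: "vnorm (transpose_mat U *\<^sub>v v) = vnorm v"
    by (rule isometry[of _ d d]) (use U UUt v' in auto)
  have comp: "(transpose_mat (Ufirst k U) *\<^sub>v v) $ i = (transpose_mat U *\<^sub>v v) $ i" if i: "i < k" for i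
  proof -
    have "col (Ufirst k U) i = col U i" using U i k by (intro eq_vecI) (auto simp: Ufirst_def)
    then show ?thesis using i k U by auto
  qed
  have "vnorm (transpose_mat (Ufirst k U) *\<^sub>v v) = sqrt (\<Sum>i\<in>{0..<k}. ((transpose_mat U *\<^sub>v v) $ i)\<^sup>2)"
    unfolding vnorm_L2 L2_set_def using U comp by (auto intro!: arg_cong[where f=sqrt] sum.cong)
  also have "\<dots> \<le> sqrt (\<Sum>i\<in>{0..<d}. ((transpose_mat U *\<^sub>v v) $ i)\<^sup>2)"
    using k by (intro real_sqrt_le_mono sum_mono2) auto
  also have "\<dots> = vnorm v" using iso U unfolding vnorm_L2 L2_set_def by simp
  finally show "vnorm (transpose_mat (Ufirst k U) *\<^sub>v v) \<le> 1 * vnorm v" by simp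
qed

lemma diagm_mult: "diagm n f * diagm n g = diagm n (\<lambda>i. f i * g i)"
proof (rule eq_matI)
  fix i j assume ij: "i < dim_row (diagm n (\<lambda>i. f i * g i))" "j < dim_col (diagm n (\<lambda>i. f i * g i))"
  then have ij': "i < n" "j < n" by (auto simp: diagm_def)
  have "(diagm n f * diagm n g) $$ (i, j) = (\<Sum>l\<in>{0..<n}. (if i = l then f i else 0) * (if l = j then g l else 0))"
    using ij' by (auto simp: diagm_def scalar_prod_def intro!: sum.cong)
  also have "\<dots> = (\<Sum>l\<in>{0..<n}. if l = i then (if i = j then f i * g i else 0) else 0)"
    by (intro sum.cong) auto
  also have "\<dots> = diagm n (\<lambda>i. f i * g i) $$ (i, j)" using ij' by (simp add: diagm_def)
  finally show "(diagm n f * diagm n g) $$ (i, j) = diagm n (\<lambda>i. f i * g i) $$ (i, j)" .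
qed (auto simp: diagm_def)

lemma one_diagm: "1\<^sub>m n = diagm n (\<lambda>i. 1)"
  by (rule eq_matI) (auto simp: diagm_def)

lemma minv_Lam_first: assumes "\<forall>i<k. lam i > 0"
  shows "invertible_mat (Lam_first k lam)" "minv (Lam_first k lam) = diagm k (\<lambda>i. 1 / lam i)"
proof -
  have "Lam_first k lam * diagm k (\<lambda>i. 1 / lam i) = diagm k (\<lambda>i. lam i * (1 / lam i))"
    unfolding Lam_first_def by (rule diagm_mult)
  also have "\<dots> = 1\<^sub>m k" unfolding one_diagm diagm_def using assms by (intro eq_matI) auto
  finally have e: "Lam_first k lam * diagm k (\<lambda>i. 1 / lam i) = 1\<^sub>m k" .
  have c: "diagm k (\<lambda>i. 1 / lam i) \<in> carrier_mat k k" by (auto simp: diagm_def)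
  show "invertible_mat (Lam_first k lam)" "minv (Lam_first k lam) = diagm k (\<lambda>i. 1 / lam i)"
    using inv_unique[OF Lam_first_carrier c e] by auto
qed

lemma eig_first: fixes A U :: "real mat"
  assumes A: "A \<in> carrier_mat d d" "transpose_mat A = A" and U: "U \<in> carrier_mat d d"
    and eig: "\<forall>i<d. A *\<^sub>v col U i = lam i \<cdot>\<^sub>v col U i" and k: "k \<le> d"
  shows "transpose_mat (Ufirst k U) * A = Lam_first k lam * transpose_mat (Ufirst k U)"
proof (rule eq_matI)
  fix i j assume ij: "i < dim_row (Lam_first k lam * transpose_mat (Ufirst k U))"
    "j < dim_col (Lam_first k lam * transpose_mat (Ufirst k U))"
  then have i: "i < k" and j: "j < d" using U by auto
  have cu: "col (Ufirst k U) i = col U i" using U i k by (intro eq_vecI) (auto simp: Ufirst_def)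
  have rowA: "row A j = col A j" using row_transpose[of j A] A j by auto
  have "(transpose_mat (Ufirst k U) * A) $$ (i, j) = col U i \<bullet> col A j"
    using i j U A cu by simp
  also have "\<dots> = row A j \<bullet> col U i" unfolding rowA by (rule comm_scalar_prod[of _ d]) (use A U in auto)
  also have "\<dots> = (A *\<^sub>v col U i) $ j" using A j by simp
  also have "\<dots> = lam i * U $$ (j, i)" using eig i k j U by simp
  finally have l: "(transpose_mat (Ufirst k U) * A) $$ (i, j) = lam i * U $$ (j, i)" .
  have "(Lam_first k lam * transpose_mat (Ufirst k U)) $$ (i, j)
      = (\<Sum>l\<in>{0..<k}. (if i = l then lam i else 0) * U $$ (j, l))"
    using i j U k by (auto simp: Lam_first_def diagm_def Ufirst_def scalar_prod_def intro!: sum.cong)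
  also have "\<dots> = (\<Sum>l\<in>{0..<k}. if l = i then lam i * U $$ (j, i) else 0)" by (intro sum.cong) auto
  also have "\<dots> = lam i * U $$ (j, i)" using i by simp
  finally show "(transpose_mat (Ufirst k U) * A) $$ (i, j) = (Lam_first k lam * transpose_mat (Ufirst k U)) $$ (i, j)"
    using l by simp
qed (use A U in auto)

lemma eig_rest: fixes A U :: "real mat"
  assumes A: "A \<in> carrier_mat d d" "transpose_mat A = A" and U: "U \<in> carrier_mat d d"
    and eig: "\<forall>i<d. A *\<^sub>v col U i = lam i \<cdot>\<^sub>v col U i" and k: "k \<le> d"
  shows "transpose_mat (Urest k U) * A = Lam_rest d k lam * transpose_mat (Urest k U)"
proof (rule eq_matI)
  fix i j assume ij: "i < dim_row (Lam_rest d k lam * transpose_mat (Urest k U))"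
    "j < dim_col (Lam_rest d k lam * transpose_mat (Urest k U))"
  then have i: "i < d - k" and j: "j < d" using U by auto
  have cu: "col (Urest k U) i = col U (k + i)" using U i k by (intro eq_vecI) (auto simp: Urest_def)
  have rowA: "row A j = col A j" using row_transpose[of j A] A j by auto
  have "(transpose_mat (Urest k U) * A) $$ (i, j) = col U (k + i) \<bullet> col A j"
    using i j U A cu by simp
  also have "\<dots> = row A j \<bullet> col U (k + i)" unfolding rowA by (rule comm_scalar_prod[of _ d]) (use A U in auto)
  also have "\<dots> = (A *\<^sub>v col U (k + i)) $ j" using A j by simp
  also have "\<dots> = lam (k + i) * U $$ (j, k + i)" using eig i k j U by simp
  finally have l: "(transpose_mat (Urest k U) * A) $$ (i, j) = lam (k + i) * U $$ (j, k + i)" .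
  have "(Lam_rest d k lam * transpose_mat (Urest k U)) $$ (i, j)
      = (\<Sum>l\<in>{0..<d - k}. (if i = l then lam (k + i) else 0) * U $$ (j, k + l))"
    using i j U k by (auto simp: Lam_rest_def diagm_def Urest_def scalar_prod_def intro!: sum.cong)
  also have "\<dots> = (\<Sum>l\<in>{0..<d - k}. if l = i then lam (k + i) * U $$ (j, k + i) else 0)" by (intro sum.cong) auto
  also have "\<dots> = lam (k + i) * U $$ (j, k + i)" using i by simp
  finally show "(transpose_mat (Urest k U) * A) $$ (i, j) = (Lam_rest d k lam * transpose_mat (Urest k U)) $$ (i, j)"
    using l by simp
qed (use A U in auto)


lemma minv_carrier: "M \<in> carrier_mat n n \<Longrightarrow> minv M \<in> carrier_mat n n"
proof (cases "invertible_mat M")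
  case True
  assume "M \<in> carrier_mat n n" then show ?thesis using minv_props(1)[OF True] by auto
next
  case False
  assume "M \<in> carrier_mat n n" then show ?thesis using False by (auto simp: minv_def)
qed

lemma proj_step: fixes WT Lw A Xt Xp Ri Z :: "real mat" and c :: real
  assumes W: "WT \<in> carrier_mat m d" and Lw: "Lw \<in> carrier_mat m m" and WA: "WT * A = Lw * WT"
    and A: "A \<in> carrier_mat d d" and Xt: "Xt \<in> carrier_mat d k" and Xp: "Xp \<in> carrier_mat d k"
    and Ri: "Ri \<in> carrier_mat k k" and Z: "Z \<in> carrier_mat d k"
  shows "WT * (A * Xt - c \<cdot>\<^sub>m (Xp * Ri) + Z) = Lw * (WT * Xt) - c \<cdot>\<^sub>m ((WT * Xp) * Ri) + WT * Z"
proof -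
  have "WT * (A * Xt - c \<cdot>\<^sub>m (Xp * Ri) + Z) = WT * (A * Xt - c \<cdot>\<^sub>m (Xp * Ri)) + WT * Z"
    by (rule mult_add_distrib_mat[of _ m d]) (use assms in auto)
  also have "WT * (A * Xt - c \<cdot>\<^sub>m (Xp * Ri)) = WT * (A * Xt) - WT * (c \<cdot>\<^sub>m (Xp * Ri))"
    by (rule mult_minus_distrib_mat[of _ m d]) (use assms in auto)
  also have "WT * (A * Xt) = (WT * A) * Xt" by (rule assoc_mult_mat[symmetric]) (use assms in auto)
  also have "\<dots> = Lw * (WT * Xt)" unfolding WA by (rule assoc_mult_mat) (use assms in auto)
  also have "WT * (c \<cdot>\<^sub>m (Xp * Ri)) = c \<cdot>\<^sub>m (WT * (Xp * Ri))" by (rule mult_smult_distrib) (use assms in auto)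
  also have "WT * (Xp * Ri) = (WT * Xp) * Ri" by (rule assoc_mult_mat[symmetric]) (use assms in auto)
  finally show ?thesis .
qed

lemma proj_step1: fixes WT Lw A Xt Z :: "real mat" and c :: real
  assumes W: "WT \<in> carrier_mat m d" and Lw: "Lw \<in> carrier_mat m m" and WA: "WT * A = Lw * WT"
    and A: "A \<in> carrier_mat d d" and Xt: "Xt \<in> carrier_mat d k" and Z: "Z \<in> carrier_mat d k"
  shows "WT * (c \<cdot>\<^sub>m (A * Xt) + Z) = c \<cdot>\<^sub>m (Lw * (WT * Xt)) + WT * Z"
proof -
  have "WT * (c \<cdot>\<^sub>m (A * Xt) + Z) = WT * (c \<cdot>\<^sub>m (A * Xt)) + WT * Z"
    by (rule mult_add_distrib_mat[of _ m d]) (use assms in auto)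
  also have "WT * (c \<cdot>\<^sub>m (A * Xt)) = c \<cdot>\<^sub>m (WT * (A * Xt))" by (rule mult_smult_distrib) (use assms in auto)
  also have "WT * (A * Xt) = (WT * A) * Xt" by (rule assoc_mult_mat[symmetric]) (use assms in auto)
  also have "\<dots> = Lw * (WT * Xt)" unfolding WA by (rule assoc_mult_mat) (use assms in auto)
  finally show ?thesis .
qed

locale anpm =
  fixes d k :: nat and \<beta> :: real and A U :: "real mat" and lam :: "nat \<Rightarrow> real"
    and X R Xi :: "nat \<Rightarrow> real mat"
  assumes dk: "d > k" "k \<ge> 1"
    and A: "A \<in> carrier_mat d d" "transpose_mat A = A"
    and U: "U \<in> carrier_mat d d" "transpose_mat U * U = 1\<^sub>m d"
    and eig: "\<forall>i<d. A *\<^sub>v col U i = lam i \<cdot>\<^sub>v col U i"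
    and lam_sorted: "\<forall>i j. i \<le> j \<and> j < d \<longrightarrow> lam j \<le> lam i"
    and beta: "\<beta> > 0" "lam (k - 1) > 2 * sqrt \<beta>"
    and X0: "X 0 \<in> stiefel d k" "cos (theta (Ufirst k U) (X 0)) > 0"
    and Xi_dim: "\<forall>t. Xi t \<in> carrier_mat d k"
    and step1: "is_QR k ((1/2) \<cdot>\<^sub>m (A * X 0) + Xi 0) (X 1) (R 1)"
    and step: "\<forall>t\<ge>1. is_QR k (A * X t - \<beta> \<cdot>\<^sub>m (X (t - 1) * minv (R t)) + Xi t)
                             (X (t + 1)) (R (t + 1))"
    and pert2: "\<forall>t. spec_norm (transpose_mat (Ufirst k U) * Xi t)
                     \<le> (1/32) * (lam (k - 1) - 2 * sqrt \<beta>) * cos (theta (Ufirst k U) (X t))"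
begin

abbreviation "Uk \<equiv> transpose_mat (Ufirst k U)"
abbreviation "Ur \<equiv> transpose_mat (Urest k U)"
abbreviation "L \<equiv> Lam_first k lam"
abbreviation "Lr \<equiv> Lam_rest d k lam"
definition "P t = Uk * X t"
definition "Q t = Ur * X t"
definition "E t = Em k U lam (Xi t) (X t)"
abbreviation "G \<equiv> Gm k lam \<beta> E"
abbreviation "C \<equiv> Cm k lam \<beta> E"
definition "Li = minv L"
definition "Mf t = (if t = 0 then (1/2) \<cdot>\<^sub>m 1\<^sub>m k + E 0 else 1\<^sub>m k - \<beta> \<cdot>\<^sub>m (Li * G (t - 1) * Li) + E t)"
definition "S = rec_nat (minv (P 0)) (\<lambda>t St. R (Suc t) * St)"

lemma S_simps: "S 0 = minv (P 0)" "S (Suc t) = R (Suc t) * S t"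
  unfolding S_def by simp_all

lemma G_Mf: "G t = minv (Mf t)"
  by (cases t) (simp_all add: Mf_def Li_def)

lemma lam_pos: "i < k \<Longrightarrow> lam i \<ge> lam (k - 1)" "lam (k - 1) > 0"
proof -
  show "i < k \<Longrightarrow> lam i \<ge> lam (k - 1)"
  proof -
    assume "i < k"
    then have "i \<le> k - 1" "k - 1 < d" using dk by auto
    then show ?thesis using lam_sorted by blast
  qed
  have "sqrt \<beta> > 0" using beta by auto
  then show "lam (k - 1) > 0" using beta by linarith
qed

lemma Li_eq: "Li = diagm k (\<lambda>i. 1 / lam i)" "invertible_mat L"
proof -
  have pos: "\<forall>i<k. lam i > 0"
  proof (intro allI impI)
    fix i assume "i < k"
    then have "lam i \<ge> lam (k - 1)" by (rule lam_pos(1))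
    then show "lam i > 0" using lam_pos(2) by linarith
  qed
  show "Li = diagm k (\<lambda>i. 1 / lam i)" unfolding Li_def by (rule minv_Lam_first(2)[OF pos])
  show "invertible_mat L" by (rule minv_Lam_first(1)[OF pos])
qed

lemma Li_carrier[simp]: "Li \<in> carrier_mat k k"
  unfolding Li_def by (rule minv_carrier) simp

lemma L_Li: "L * Li = 1\<^sub>m k" "Li * L = 1\<^sub>m k"
  using minv_props[OF Li_eq(2) Lam_first_carrier] unfolding Li_def by auto

lemma QR_t: "t \<ge> 1 \<Longrightarrow> X t \<in> carrier_mat d k \<and> R t \<in> carrier_mat k k \<and> transpose_mat (X t) * X t = 1\<^sub>m k"
proof -
  assume t: "t \<ge> 1"
  show ?thesis
  proof (cases "t = 1")
    case True
    then show ?thesis using step1 Xi_dim unfolding is_QR_def by auto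
  next
    case False
    obtain s where s: "t = Suc s" using t by (cases t) auto
    then have s1: "s \<ge> 1" using False by simp
    have "is_QR k (A * X s - \<beta> \<cdot>\<^sub>m (X (s - 1) * minv (R s)) + Xi s) (X (s + 1)) (R (s + 1))"
      using step s1 by blast
    then show ?thesis using s Xi_dim unfolding is_QR_def by auto
  qed
qed

lemma R_carrier: "t \<ge> 1 \<Longrightarrow> R t \<in> carrier_mat k k" using QR_t by auto

lemma X_carrier[simp]: "X t \<in> carrier_mat d k"
  using QR_t[of t] X0 by (cases "t = 0") (auto simp: stiefel_def)

lemma XtX: "transpose_mat (X t) * X t = 1\<^sub>m k"
  using QR_t[of t] X0 by (cases "t = 0") (auto simp: stiefel_def)

lemma Xi_carrier[simp]: "Xi t \<in> carrier_mat d k" using Xi_dim by auto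

lemma U_dims[simp]: "dim_row U = d" "dim_col U = d" using U by auto

lemma Uk_carrier[simp]: "Uk \<in> carrier_mat k d" using U by auto
lemma Ur_carrier[simp]: "Ur \<in> carrier_mat (d - k) d" using U by auto

lemma P_carrier[simp]: "P t \<in> carrier_mat k k" unfolding P_def by (rule mult_carrier_mat[of _ k d]) auto
lemma Q_carrier[simp]: "Q t \<in> carrier_mat (d - k) k" unfolding Q_def by (rule mult_carrier_mat[of _ "d - k" d]) auto
lemma E_eq: "E t = Li * (Uk * Xi t) * minv (P t)" unfolding E_def Em_def Li_def P_def ..
lemma UkXi_carrier[simp]: "Uk * Xi t \<in> carrier_mat k k" by (rule mult_carrier_mat[of _ k d]) auto
lemma UrXi_carrier[simp]: "Ur * Xi t \<in> carrier_mat (d - k) k" by (rule mult_carrier_mat[of _ "d - k" d]) auto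
lemma E_carrier[simp]: "E t \<in> carrier_mat k k" unfolding E_eq
  by (rule mult_carrier_mat[OF mult_carrier_mat[OF Li_carrier UkXi_carrier] minv_carrier[OF P_carrier]])
lemma G_carrier[simp]: "G t \<in> carrier_mat k k"
  by (cases t) (auto intro!: minv_carrier)
lemma Mf_carrier[simp]: "Mf t \<in> carrier_mat k k"
  unfolding Mf_def by auto
lemma C_carrier[simp]: "C t \<in> carrier_mat k k"
  by (induction t) (auto intro!: minv_carrier mult_carrier_mat[of _ k k])
lemma S_carrier[simp]: "S t \<in> carrier_mat k k"
  by (induction t) (auto simp: S_simps intro!: minv_carrier mult_carrier_mat[of _ k k] R_carrier)

lemma recP0: "P 1 * R 1 = (1/2) \<cdot>\<^sub>m (L * P 0) + Uk * Xi 0"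
  and recQ0: "Q 1 * R 1 = (1/2) \<cdot>\<^sub>m (Lr * Q 0) + Ur * Xi 0"
proof -
  have Y: "(1/2) \<cdot>\<^sub>m (A * X 0) + Xi 0 = X 1 * R 1" using step1 unfolding is_QR_def by auto
  have R1: "R 1 \<in> carrier_mat k k" using R_carrier by auto
  have "P 1 * R 1 = Uk * (X 1 * R 1)" unfolding P_def by (rule assoc_mult_mat) (use R1 in auto)
  also have "\<dots> = (1/2) \<cdot>\<^sub>m (L * P 0) + Uk * Xi 0" unfolding Y[symmetric] P_def
    by (rule proj_step1[where m=k and d=d and k=k]) (use eig_first[OF A U(1) eig] dk A in auto)
  finally show "P 1 * R 1 = (1/2) \<cdot>\<^sub>m (L * P 0) + Uk * Xi 0" .
  have "Q 1 * R 1 = Ur * (X 1 * R 1)" unfolding Q_def by (rule assoc_mult_mat) (use R1 in auto)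
  also have "\<dots> = (1/2) \<cdot>\<^sub>m (Lr * Q 0) + Ur * Xi 0" unfolding Y[symmetric] Q_def
    by (rule proj_step1[where m="d - k" and d=d and k=k]) (use eig_rest[OF A U(1) eig] dk A in auto)
  finally show "Q 1 * R 1 = (1/2) \<cdot>\<^sub>m (Lr * Q 0) + Ur * Xi 0" .
qed

lemma recP: "t \<ge> 1 \<Longrightarrow> P (t + 1) * R (t + 1) = L * P t - \<beta> \<cdot>\<^sub>m (P (t - 1) * minv (R t)) + Uk * Xi t"
  and recQ: "t \<ge> 1 \<Longrightarrow> Q (t + 1) * R (t + 1) = Lr * Q t - \<beta> \<cdot>\<^sub>m (Q (t - 1) * minv (R t)) + Ur * Xi t"
proof -
  assume t: "t \<ge> 1"
  have Y: "A * X t - \<beta> \<cdot>\<^sub>m (X (t - 1) * minv (R t)) + Xi t = X (t + 1) * R (t + 1)"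
    using step t unfolding is_QR_def by auto
  have R1: "R (t + 1) \<in> carrier_mat k k" "minv (R t) \<in> carrier_mat k k"
    using R_carrier t by (auto intro: minv_carrier)
  have "P (t + 1) * R (t + 1) = Uk * (X (t + 1) * R (t + 1))" unfolding P_def by (rule assoc_mult_mat) (use R1 in auto)
  also have "\<dots> = L * P t - \<beta> \<cdot>\<^sub>m (P (t - 1) * minv (R t)) + Uk * Xi t" unfolding Y[symmetric] P_def
    by (rule proj_step[where m=k and d=d and k=k]) (use eig_first[OF A U(1) eig] dk A R1 in auto)
  finally show "P (t + 1) * R (t + 1) = L * P t - \<beta> \<cdot>\<^sub>m (P (t - 1) * minv (R t)) + Uk * Xi t" .
  have "Q (t + 1) * R (t + 1) = Ur * (X (t + 1) * R (t + 1))" unfolding Q_def by (rule assoc_mult_mat) (use R1 in auto)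
  also have "\<dots> = Lr * Q t - \<beta> \<cdot>\<^sub>m (Q (t - 1) * minv (R t)) + Ur * Xi t" unfolding Y[symmetric] Q_def
    by (rule proj_step[where m="d - k" and d=d and k=k]) (use eig_rest[OF A U(1) eig] dk A R1 in auto)
  finally show "Q (t + 1) * R (t + 1) = Lr * Q t - \<beta> \<cdot>\<^sub>m (Q (t - 1) * minv (R t)) + Ur * Xi t" .
qed

end


lemma nb_mult_minv: fixes A P :: "real mat"
  assumes A: "A \<in> carrier_mat m n" and P: "P \<in> carrier_mat n n" and inv: "invertible_mat P"
    and nbA: "nb A (a * \<sigma>)" and a: "a \<ge> 0"
    and low: "\<And>x. x \<in> carrier_vec n \<Longrightarrow> \<sigma> * vnorm x \<le> vnorm (P *\<^sub>v x)"
  shows "nb (A * minv P) a"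
  unfolding nb_def
proof
  note mp = minv_props[OF inv P]
  fix y :: "real vec" assume y: "y \<in> carrier_vec (dim_col (A * minv P))"
  then have y': "y \<in> carrier_vec n" using mp by auto
  let ?x = "minv P *\<^sub>v y"
  have x: "?x \<in> carrier_vec n" using mp y' by auto
  have Px: "P *\<^sub>v ?x = y"
  proof -
    have "P *\<^sub>v ?x = (P * minv P) *\<^sub>v y" by (rule assoc_mult_mat_vec[symmetric]) (use mp P y' in auto)
    then show ?thesis using mp y' by simp
  qed
  have "(A * minv P) *\<^sub>v y = A *\<^sub>v ?x" by (rule assoc_mult_mat_vec) (use mp A y' in auto)
  moreover have "vnorm (A *\<^sub>v ?x) \<le> a * \<sigma> * vnorm ?x" using nbD[OF nbA] A x by (metis carrier_matD(2))
  ultimately have "vnorm ((A * minv P) *\<^sub>v y) \<le> a * \<sigma> * vnorm ?x" by simp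
  also have "\<dots> = a * (\<sigma> * vnorm ?x)" by simp
  also have "\<dots> \<le> a * vnorm y" using low[OF x] Px a by (simp add: mult_left_mono)
  finally show "vnorm ((A * minv P) *\<^sub>v y) \<le> a * vnorm y" .
qed

context anpm begin

lemma dims2[simp]: "dim_col (X t) = k" "dim_row (X t) = d" "dim_col (P t) = k" "dim_row (P t) = k"
  "dim_col (E t) = k" "dim_row (E t) = k" "dim_col Li = k" "dim_row Li = k"
  "dim_col (G t) = k" "dim_row (G t) = k" "dim_col (Mf t) = k" "dim_row (Mf t) = k"
  using carrier_matD[OF X_carrier[of t]] carrier_matD[OF P_carrier[of t]] carrier_matD[OF E_carrier[of t]]
    carrier_matD[OF Li_carrier] carrier_matD[OF G_carrier[of t]] carrier_matD[OF Mf_carrier[of t]] by auto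

definition "lk = lam (k - 1)"
definition "sb = sqrt \<beta>"
definition "g = lk / sb"
definition "e = (lk - 2 * sb) / (32 * lk)"

lemma num_basic: "sb > 0" "lk > 2 * sb" "lk > 0" "sb * sb = \<beta>" "g > 0" "e \<ge> 0"
proof -
  show sb: "sb > 0" unfolding sb_def using beta by auto
  show lk: "lk > 2 * sb" unfolding lk_def sb_def using beta by auto
  show "lk > 0" using sb lk by linarith
  show "sb * sb = \<beta>" unfolding sb_def using beta by simp
  show "g > 0" unfolding g_def using sb lk by auto
  show "e \<ge> 0" unfolding e_def using sb lk by auto
qed

lemma num1: "e < 1/2" "1 / (1/2 - e) \<le> g"
proof -
  note n = num_basic
  have eq: "g * (1/2 - e) = (15 * lk + 2 * sb) / (32 * sb)"
    unfolding g_def e_def using n by (simp add: field_simps)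
  have ge: "(15 * lk + 2 * sb) / (32 * sb) \<ge> 1" using n by (simp add: le_divide_eq)
  have pos: "1/2 - e > 0"
  proof -
    have "g * (1/2 - e) > 0" using eq ge by linarith
    then show ?thesis using n by (simp add: zero_less_mult_iff)
  qed
  then show "e < 1/2" by simp
  show "1 / (1/2 - e) \<le> g" using pos eq ge by (simp add: divide_le_eq mult.commute)
qed

lemma num2: "e + sb / lk < 1" "1 / (1 - (e + sb / lk)) \<le> g" "\<bar>\<beta>\<bar> * (1 / lk * g * (1 / lk)) = sb / lk"
proof -
  note n = num_basic
  have eq: "g * (1 - (e + sb / lk)) = (31 * lk - 30 * sb) / (32 * sb)"
    unfolding g_def e_def using n by (simp add: field_simps)
  have ge: "(31 * lk - 30 * sb) / (32 * sb) \<ge> 1" using n by (simp add: le_divide_eq)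
  have pos: "1 - (e + sb / lk) > 0"
  proof -
    have "g * (1 - (e + sb / lk)) > 0" using eq ge by linarith
    then show ?thesis using n by (simp add: zero_less_mult_iff)
  qed
  then show "e + sb / lk < 1" by simp
  show "1 / (1 - (e + sb / lk)) \<le> g" using pos eq ge by (simp add: divide_le_eq mult.commute)
  show "\<bar>\<beta>\<bar> * (1 / lk * g * (1 / lk)) = sb / lk"
  proof -
    have "\<bar>\<beta>\<bar> * (1 / lk * g * (1 / lk)) = (sb * sb) * (1 / lk * (lk / sb) * (1 / lk))"
      unfolding g_def using n(4) beta by simp
    also have "\<dots> = sb / lk" using n(1,3) by (simp add: field_simps)
    finally show ?thesis .
  qed
qed

lemma nb_X: "nb (X t) 1"
  unfolding nb_def using isometry[OF X_carrier XtX] by auto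

lemma nb_P: "nb (P t) 1"
proof -
  have "nb (Uk * X t) (1 * 1)"
    by (rule nb_mult[of _ k d _ k]) (use nb_UfirstT[OF U] dk nb_X in auto)
  then show ?thesis unfolding P_def by simp
qed

lemma sig_props: "0 \<le> sigma_min (P t)" "sigma_min (P t) \<le> 1"
  "cos (theta (Ufirst k U) (X t)) = sigma_min (P t)"
proof -
  have dc: "dim_col (P t) > 0" using dk by auto
  show "0 \<le> sigma_min (P t)" "sigma_min (P t) \<le> 1" using sigma_min_bounds[OF dc nb_P] by auto
  then show "cos (theta (Ufirst k U) (X t)) = sigma_min (P t)"
    unfolding theta_def P_def by (intro cos_arccos) auto
qed

lemma sig_lower: "x \<in> carrier_vec k \<Longrightarrow> sigma_min (P t) * vnorm x \<le> vnorm (P t *\<^sub>v x)"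
  using sigma_min_lower[of x "P t"] by auto

lemma P0_inv: "invertible_mat (P 0)"
proof (rule inj_invertible[OF P_carrier])
  fix v assume v: "v \<in> carrier_vec k" "P 0 *\<^sub>v v = 0\<^sub>v k"
  have s: "sigma_min (P 0) > 0" using X0(2) sig_props(3)[of 0] by simp
  have "sigma_min (P 0) * vnorm v \<le> 0" using sig_lower[OF v(1), of 0] v(2) by (simp add: vnorm_def)
  then have "vnorm v \<le> 0" using s by (simp add: mult_le_0_iff)
  then have "vnorm v = 0" using vnorm_nonneg[of v] by linarith
  then show "v = 0\<^sub>v k" using vnorm_eq0[of v] v(1) by (simp add: carrier_vecD)
qed

lemma nb_Li: "nb Li (1 / lk)"
  unfolding Li_eq
proof (rule nb_diag)
  show "\<forall>i<k. \<bar>1 / lam i\<bar> \<le> 1 / lk"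
  proof (intro allI impI)
    fix i assume i: "i < k"
    have "lam i \<ge> lk" "lk > 0" using lam_pos(1)[OF i] num_basic unfolding lk_def by auto
    then show "\<bar>1 / lam i\<bar> \<le> 1 / lk" by (simp add: frac_le)
  qed
  show "0 \<le> 1 / lk" using num_basic by simp
qed

lemma E_bound: assumes inv: "invertible_mat (P t)" shows "nb (E t) e"
proof -
  let ?\<sigma> = "sigma_min (P t)"
  have h: "spec_norm (Uk * Xi t) \<le> (1/32) * (lam (k - 1) - 2 * sqrt \<beta>) * cos (theta (Ufirst k U) (X t))"
    by (rule pert2[rule_format])
  have "spec_norm (Uk * Xi t) \<le> (1/32) * (lk - 2 * sb) * ?\<sigma>"
    using h unfolding lk_def sb_def sig_props(3)[of t] .
  then have n1: "nb (Uk * Xi t) ((1/32) * (lk - 2 * sb) * ?\<sigma>)" by (rule spec_norm_nb)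
  have "nb (Li * (Uk * Xi t)) (1 / lk * ((1/32) * (lk - 2 * sb) * ?\<sigma>))"
    by (rule nb_mult[of _ k k _ k]) (use n1 nb_Li num_basic in auto)
  moreover have "1 / lk * ((1/32) * (lk - 2 * sb) * ?\<sigma>) = e * ?\<sigma>"
    unfolding e_def using num_basic by (simp add: field_simps)
  ultimately have n2: "nb (Li * (Uk * Xi t)) (e * ?\<sigma>)" by simp
  show ?thesis unfolding E_eq
    by (rule nb_mult_minv[of _ k k]) (use n2 inv num_basic sig_lower mult_carrier_mat[OF Li_carrier UkXi_carrier] in auto)
qed

lemma Mf0_eq: "Mf 0 - (1/2) \<cdot>\<^sub>m 1\<^sub>m k = E 0"
  unfolding Mf_def by (rule eq_matI) auto

lemma Mf_eq: "t \<ge> 1 \<Longrightarrow> Mf t - 1 \<cdot>\<^sub>m 1\<^sub>m k = E t - \<beta> \<cdot>\<^sub>m (Li * G (t - 1) * Li)"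
proof -
  assume t: "t \<ge> 1"
  have c: "Li * G (t - 1) * Li \<in> carrier_mat k k" by (auto intro!: mult_carrier_mat[of _ k k])
  show ?thesis unfolding Mf_def using t c by (intro eq_matI) auto
qed

lemma MG: assumes inv: "invertible_mat (P t)" and prev: "t \<ge> 1 \<Longrightarrow> nb (G (t - 1)) g"
  shows "invertible_mat (Mf t)" "nb (G t) g"
proof -
  have "invertible_mat (Mf t) \<and> nb (G t) g"
  proof (cases "t = 0")
    case True
    have n: "nb (Mf 0 - (1/2) \<cdot>\<^sub>m 1\<^sub>m k) e" unfolding Mf0_eq using E_bound inv True by simp
    note r = nb_inv[OF Mf_carrier n num_basic(6) num1(1)]
    have "nb (G 0) g" unfolding G_Mf by (rule nb_mono[OF r(2) num1(2)])
    then show ?thesis using r True by simp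
  next
    case False
    then have t: "t \<ge> 1" by simp
    have n1: "nb (Li * G (t - 1)) (1 / lk * g)"
      by (rule nb_mult[of _ k k _ k]) (use nb_Li prev t num_basic in auto)
    have nG: "nb (Li * G (t - 1) * Li) (1 / lk * g * (1 / lk))"
      by (rule nb_mult[of _ k k _ k]) (use n1 nb_Li num_basic in auto)
    have cG: "Li * G (t - 1) * Li \<in> carrier_mat k k"
      by (rule mult_carrier_mat[OF mult_carrier_mat[OF Li_carrier G_carrier] Li_carrier])
    have nb2': "nb (\<beta> \<cdot>\<^sub>m (Li * G (t - 1) * Li)) (\<bar>\<beta>\<bar> * (1 / lk * g * (1 / lk)))"
      by (rule nb_smult[OF cG nG]) (use num_basic in simp)
    have nb2: "nb (\<beta> \<cdot>\<^sub>m (Li * G (t - 1) * Li)) (sb / lk)"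
      using nb2' unfolding num2(3) .
    have nbM: "nb (Mf t - 1 \<cdot>\<^sub>m 1\<^sub>m k) (e + sb / lk)" unfolding Mf_eq[OF t]
      by (rule nb_minus[of _ k k]) (use E_bound[OF inv] nb2 in \<open>auto intro!: mult_carrier_mat[of _ k k]\<close>)
    have q0: "0 \<le> e + sb / lk" using num_basic by simp
    note r = nb_inv[OF Mf_carrier nbM q0 num2(1)]
    have "nb (G t) g" unfolding G_Mf by (rule nb_mono[OF r(2) num2(2)])
    then show ?thesis using r by simp
  qed
  then show "invertible_mat (Mf t)" "nb (G t) g" by auto
qed

end


lemma minv_cancel: fixes M Y :: "real mat" assumes inv: "invertible_mat M" and M: "M \<in> carrier_mat n n"
  and Y: "Y \<in> carrier_mat n m"
  shows "minv M * (M * Y) = Y" "M * (minv M * Y) = Y"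
proof -
  note mp = minv_props[OF inv M]
  have "minv M * (M * Y) = (minv M * M) * Y" by (rule assoc_mult_mat[symmetric]) (use mp M Y in auto)
  then show "minv M * (M * Y) = Y" using mp Y by simp
  have "M * (minv M * Y) = (M * minv M) * Y" by (rule assoc_mult_mat[symmetric]) (use mp M Y in auto)
  then show "M * (minv M * Y) = Y" using mp Y by simp
qed

context anpm begin

lemmas kk = assoc_mult_mat[of _ k k _ k _ k] add_mult_distrib_mat[of _ k k _ _ k]
  mult_add_distrib_mat[of _ k k _ k _] minus_mult_distrib_mat[of _ k k _ _ k]
  mult_minus_distrib_mat[of _ k k _ k _] mult_smult_assoc_mat[of _ k k _ k]
  mult_smult_distrib[of _ k k _ k] mult_carrier_mat[of _ k k _ k] minus_carrier_mat

lemma minvP_carrier[simp]: "minv (P t) \<in> carrier_mat k k" by (rule minv_carrier) simp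
lemma minvRS_carrier[simp]: "minv (R (Suc t)) \<in> carrier_mat k k" by (rule minv_carrier) (simp add: R_carrier)

lemma dims3[simp]: "dim_col (minv (P t)) = k" "dim_row (minv (P t)) = k"
  "dim_col (C t) = k" "dim_row (C t) = k" "dim_col (S t) = k" "dim_row (S t) = k"
  using carrier_matD[OF minvP_carrier[of t]] carrier_matD[OF C_carrier[of t]] carrier_matD[OF S_carrier[of t]]
  by auto

lemma L_Li_cancel: "Y \<in> carrier_mat k k \<Longrightarrow> L * (Li * Y) = Y"
  using minv_cancel(2)[OF Li_eq(2) Lam_first_carrier] unfolding Li_def by blast
lemma Li_L_cancel: "Y \<in> carrier_mat k k \<Longrightarrow> Li * (L * Y) = Y"
  using minv_cancel(1)[OF Li_eq(2) Lam_first_carrier] unfolding Li_def by blast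

lemma key0: "P 1 * R 1 * S 0 = L * Mf 0 * C 0"
proof -
  have PP: "P 0 * minv (P 0) = 1\<^sub>m k" using minv_props(2)[OF P0_inv P_carrier] .
  have "P 1 * R 1 * S 0 = (1/2) \<cdot>\<^sub>m L + Uk * Xi 0 * minv (P 0)"
    unfolding recP0 S_simps by (simp add: kk PP)
  moreover have "L * Mf 0 * C 0 = (1/2) \<cdot>\<^sub>m L + Uk * Xi 0 * minv (P 0)"
    unfolding Mf_def E_eq[of 0] by (simp add: kk L_Li_cancel)
  ultimately show ?thesis by simp
qed

lemma keyS: assumes iMf: "invertible_mat (Mf m)" and iP: "invertible_mat (P (Suc m))"
  and iR: "invertible_mat (R (Suc m))" and Cm: "C m = P m * S m" and CS: "C (Suc m) = P (Suc m) * S (Suc m)"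
  shows "P (Suc (Suc m)) * R (Suc (Suc m)) * S (Suc m) = L * Mf (Suc m) * C (Suc m)"
proof -
  have Rc: "R (Suc m) \<in> carrier_mat k k" using R_carrier by simp
  have rp: "P (Suc (Suc m)) * R (Suc (Suc m)) = L * P (Suc m) - \<beta> \<cdot>\<^sub>m (P m * minv (R (Suc m))) + Uk * Xi (Suc m)"
    using recP[of "Suc m"] by simp
  have f1: "minv (R (Suc m)) * S (Suc m) = S m"
    unfolding S_simps by (rule minv_cancel(1)[OF iR Rc S_carrier])
  have f2: "minv (P (Suc m)) * (P (Suc m) * S (Suc m)) = S (Suc m)"
    by (rule minv_cancel(1)[OF iP P_carrier S_carrier])
  have Cs: "C (Suc m) = L * (Mf m * C m)"
  proof -
    have "C (Suc m) = L * minv (G m) * C m" by simp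
    also have "minv (G m) = Mf m" unfolding G_Mf by (rule minv_minv(2)[OF iMf Mf_carrier])
    finally show ?thesis by (simp add: kk)
  qed
  have f3: "G m * (Li * (P (Suc m) * S (Suc m))) = P m * S m"
  proof -
    have "G m * (Li * C (Suc m)) = G m * (Mf m * C m)" unfolding Cs by (simp only: Li_L_cancel[OF mult_carrier_mat[OF Mf_carrier C_carrier]])
    also have "\<dots> = C m" unfolding G_Mf by (rule minv_cancel(1)[OF iMf Mf_carrier C_carrier])
    finally show ?thesis unfolding CS Cm .
  qed
  have lhs: "P (Suc (Suc m)) * R (Suc (Suc m)) * S (Suc m)
      = L * (P (Suc m) * S (Suc m)) - \<beta> \<cdot>\<^sub>m (P m * S m) + Uk * Xi (Suc m) * S (Suc m)"
    unfolding rp by (simp add: kk f1)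
  have rhs: "L * Mf (Suc m) * C (Suc m)
      = L * (P (Suc m) * S (Suc m)) - \<beta> \<cdot>\<^sub>m (P m * S m) + Uk * Xi (Suc m) * S (Suc m)"
    unfolding Mf_def E_eq[of "Suc m"] CS by (simp add: kk L_Li_cancel f2 f3 del: Cm.simps Gm.simps)
  show ?thesis unfolding lhs rhs ..
qed

end


context anpm begin

definition "J t \<longleftrightarrow> invertible_mat (P t) \<and> invertible_mat (S t) \<and> C t = P t * S t \<and>
   invertible_mat (Mf t) \<and> nb (G t) g \<and> (t \<ge> 1 \<longrightarrow> invertible_mat (R t))"

lemma J0: "J 0"
proof -
  note i = P0_inv
  have "invertible_mat (S 0)" unfolding S_simps by (rule minv_minv(1)[OF i P_carrier])
  moreover have "C 0 = P 0 * S 0" unfolding S_simps using minv_props(2)[OF i P_carrier] by simp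
  moreover note MG[of 0] 
  ultimately show ?thesis unfolding J_def using i by auto
qed

lemma Jstep: assumes Jt: "J t" and Jp: "t \<ge> 1 \<Longrightarrow> J (t - 1)" shows "J (Suc t)"
proof -
  from Jt have iP: "invertible_mat (P t)" and iS: "invertible_mat (S t)" and CPS: "C t = P t * S t"
    and iMf: "invertible_mat (Mf t)" and nG: "nb (G t) g" and iR: "t \<ge> 1 \<Longrightarrow> invertible_mat (R t)"
    unfolding J_def by auto
  have RS: "R (Suc t) \<in> carrier_mat k k" using R_carrier by simp
  have key: "P (Suc t) * R (Suc t) * S t = L * Mf t * C t"
  proof (cases t)
    case 0
    then show ?thesis using key0 by simp
  next
    case (Suc m)
    from Jp[unfolded Suc] have Jm: "J m" by simp
    show ?thesis unfolding Suc
      by (rule keyS) (use Jm Jt Suc iR in \<open>auto simp: J_def\<close>)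
  qed
  have iC: "invertible_mat (C t)" unfolding CPS by (rule invertible_mult[OF P_carrier S_carrier iP iS])
  have iLM: "invertible_mat (L * Mf t)" by (rule invertible_mult[OF Lam_first_carrier Mf_carrier Li_eq(2) iMf])
  have "invertible_mat (L * Mf t * C t)"
    by (rule invertible_mult[OF _ C_carrier iLM iC]) (rule mult_carrier_mat[OF Lam_first_carrier Mf_carrier])
  then have "invertible_mat ((P (Suc t) * R (Suc t)) * S t)" unfolding key .
  then have iPR: "invertible_mat (P (Suc t) * R (Suc t))"
    using invertible_factor(1)[OF mult_carrier_mat[OF P_carrier RS] S_carrier] by blast
  have iPs: "invertible_mat (P (Suc t))" and iRs: "invertible_mat (R (Suc t))"
    using invertible_factor[OF P_carrier RS iPR] by auto
  have iSs: "invertible_mat (S (Suc t))" unfolding S_simps by (rule invertible_mult[OF RS S_carrier iRs iS])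
  have "C (Suc t) = L * minv (G t) * C t" by simp
  also have "minv (G t) = Mf t" unfolding G_Mf by (rule minv_minv(2)[OF iMf Mf_carrier])
  also note key[symmetric]
  also have "P (Suc t) * R (Suc t) * S t = P (Suc t) * S (Suc t)" unfolding S_simps
    by (rule assoc_mult_mat) (use RS in auto)
  finally have CSs: "C (Suc t) = P (Suc t) * S (Suc t)" .
  have "invertible_mat (Mf (Suc t)) \<and> nb (G (Suc t)) g" using MG[OF iPs] nG by auto
  then show ?thesis unfolding J_def using iPs iSs CSs iRs by auto
qed

lemma J_all: "J t"
proof -
  have "J t \<and> J (Suc t)"
  proof (induction t)
    case 0
    then show ?case using J0 Jstep[OF J0] by auto
  next
    case (Suc t)
    then show ?case using Jstep[of "Suc t"] by auto
  qed
  then show ?thesis by simp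
qed

lemma H_eq: "Hm k U (X t) = Q t * minv (P t)" unfolding Hm_def P_def Q_def ..
lemma Psi_eq: "Psim k U (Xi t) (X t) = (Ur * Xi t) * minv (P t)" unfolding Psim_def P_def ..

lemma H_carrier[simp]: "Hm k U (X t) \<in> carrier_mat (d - k) k"
  unfolding H_eq by (rule mult_carrier_mat[OF Q_carrier minvP_carrier])
lemma Psi_carrier[simp]: "Psim k U (Xi t) (X t) \<in> carrier_mat (d - k) k"
  unfolding Psi_eq by (rule mult_carrier_mat[OF UrXi_carrier minvP_carrier])

lemma HC: "Hm k U (X t) * C t = Q t * S t"
proof -
  have iP: "invertible_mat (P t)" and CPS: "C t = P t * S t" using J_all[of t] unfolding J_def by auto
  have "Hm k U (X t) * C t = Q t * (minv (P t) * (P t * S t))" unfolding H_eq CPS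
    by (rule assoc_mult_mat[of _ "d - k" k _ k _ k]) auto
  also have "minv (P t) * (P t * S t) = S t" by (rule minv_cancel(1)[OF iP P_carrier S_carrier])
  finally show ?thesis .
qed

lemma PsiC: "Psim k U (Xi t) (X t) * C t = (Ur * Xi t) * S t"
proof -
  have iP: "invertible_mat (P t)" and CPS: "C t = P t * S t" using J_all[of t] unfolding J_def by auto
  have "Psim k U (Xi t) (X t) * C t = (Ur * Xi t) * (minv (P t) * (P t * S t))" unfolding Psi_eq CPS
    by (rule assoc_mult_mat[of _ "d - k" k _ k _ k]) auto
  also have "minv (P t) * (P t * S t) = S t" by (rule minv_cancel(1)[OF iP P_carrier S_carrier])
  finally show ?thesis .
qed

lemma LrHC: "Lr * Hm k U (X t) * C t = Lr * (Q t * S t)"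
proof -
  have "Lr * Hm k U (X t) * C t = Lr * (Hm k U (X t) * C t)" by (rule assoc_mult_mat) auto
  then show ?thesis unfolding HC .
qed

lemmas qq = assoc_mult_mat[of _ "d - k" k _ k _ k] add_mult_distrib_mat[of _ "d - k" k _ _ k]
  minus_mult_distrib_mat[of _ "d - k" k _ _ k] mult_smult_assoc_mat[of _ "d - k" k _ k]
  assoc_mult_mat[of _ "d - k" "d - k" _ k _ k] mult_carrier_mat[of _ "d - k" k _ k]
  mult_carrier_mat[of _ "d - k" "d - k" _ k] minus_carrier_mat

lemma final_step: "t \<ge> 1 \<Longrightarrow> Hm k U (X (t + 1)) * C (t + 1)
   = Lr * Hm k U (X t) * C t - \<beta> \<cdot>\<^sub>m (Hm k U (X (t - 1)) * C (t - 1)) + Psim k U (Xi t) (X t) * C t"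
proof -
  assume t: "t \<ge> 1"
  then obtain m where m: "t = Suc m" by (cases t) auto
  have iR: "invertible_mat (R (Suc m))" using J_all[of "Suc m"] unfolding J_def by auto
  have RS: "R (Suc m) \<in> carrier_mat k k" using R_carrier by simp
  have f1: "minv (R (Suc m)) * S (Suc m) = S m"
    unfolding S_simps by (rule minv_cancel(1)[OF iR RS S_carrier])
  have rq: "Q (Suc (Suc m)) * R (Suc (Suc m)) = Lr * Q (Suc m) - \<beta> \<cdot>\<^sub>m (Q m * minv (R (Suc m))) + Ur * Xi (Suc m)"
    using recQ[of "Suc m"] by simp
  have "Hm k U (X (t + 1)) * C (t + 1) = Q (Suc (Suc m)) * (R (Suc (Suc m)) * S (Suc m))"
    unfolding m HC by (simp add: S_simps)
  also have "\<dots> = (Q (Suc (Suc m)) * R (Suc (Suc m))) * S (Suc m)"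
    by (rule assoc_mult_mat[of _ "d - k" k _ k _ k, symmetric]) (auto simp: R_carrier)
  also have "\<dots> = Lr * (Q (Suc m) * S (Suc m)) - \<beta> \<cdot>\<^sub>m (Q m * S m) + Ur * Xi (Suc m) * S (Suc m)"
    unfolding rq by (simp add: qq kk f1)
  also have "\<dots> = Lr * Hm k U (X t) * C t - \<beta> \<cdot>\<^sub>m (Hm k U (X (t - 1)) * C (t - 1)) + Psim k U (Xi t) (X t) * C t"
    unfolding m LrHC HC PsiC by simp
  finally show ?thesis .
qed

lemma final0: "Hm k U (X 1) * C 1 = (1/2) \<cdot>\<^sub>m (Lr * Hm k U (X 0) * C 0) + Psim k U (Xi 0) (X 0) * C 0"
proof -
  have R1: "R 1 \<in> carrier_mat k k" using R_carrier by simp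
  have "Hm k U (X 1) * C 1 = Q 1 * (R 1 * S 0)"
    using HC[of 1] by (simp add: S_simps)
  also have "\<dots> = (Q 1 * R 1) * S 0" by (rule assoc_mult_mat[of _ "d - k" k _ k _ k, symmetric]) (insert R1, auto)
  also have "\<dots> = (1/2) \<cdot>\<^sub>m (Lr * (Q 0 * S 0)) + Ur * Xi 0 * S 0"
    unfolding recQ0 by (simp add: qq)
  also have "\<dots> = (1/2) \<cdot>\<^sub>m (Lr * Hm k U (X 0) * C 0) + Psim k U (Xi 0) (X 0) * C 0"
    unfolding LrHC PsiC ..
  finally show ?thesis .
qed

lemma E_fun: "E = (\<lambda>t. Em k U lam (Xi t) (X t))"
  by (rule ext) (simp add: E_def)

end

theorem lemma1:
  fixes d k :: nat and \<epsilon> \<beta> :: real and A U X0 :: "real mat" and lam :: "nat \<Rightarrow> real"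
    and X R Xi :: "nat \<Rightarrow> real mat"
  assumes dk: "d > k" "k \<ge> 1"
    and eps: "0 < \<epsilon>" "\<epsilon> < 1"
    and A: "A \<in> carrier_mat d d" "transpose_mat A = A"
    and psd: "\<forall>x \<in> carrier_vec d. x \<bullet> (A *\<^sub>v x) \<ge> 0"
    and U: "U \<in> carrier_mat d d" "transpose_mat U * U = 1\<^sub>m d"
    and eig: "\<forall>i<d. A *\<^sub>v col U i = lam i \<cdot>\<^sub>v col U i"
    and lam_sorted: "\<forall>i j. i \<le> j \<and> j < d \<longrightarrow> lam j \<le> lam i"
    and lam_nonneg: "\<forall>i<d. lam i \<ge> 0"
    and gap: "lam (k - 1) > lam k"
    and beta: "\<beta> > 0" "lam (k - 1) > 2 * sqrt \<beta>" "2 * sqrt \<beta> \<ge> lam k"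
    and X0: "X0 \<in> stiefel d k" "cos (theta (Ufirst k U) X0) > 0"
    and Xi_dim: "\<forall>t. Xi t \<in> carrier_mat d k"
    and init: "X 0 = X0"
    and step1: "is_QR k ((1/2) \<cdot>\<^sub>m (A * X 0) + Xi 0) (X 1) (R 1)"
    and step: "\<forall>t\<ge>1. is_QR k (A * X t - \<beta> \<cdot>\<^sub>m (X (t - 1) * minv (R t)) + Xi t)
                             (X (t + 1)) (R (t + 1))"
    and pert1: "\<forall>t. spec_norm (transpose_mat (Urest k U) * Xi t)
                     \<le> (1/32) * (lam (k - 1) - 2 * sqrt \<beta>) * \<epsilon>"
    and pert2: "\<forall>t. spec_norm (transpose_mat (Ufirst k U) * Xi t)
                     \<le> (1/32) * (lam (k - 1) - 2 * sqrt \<beta>) * cos (theta (Ufirst k U) (X t))"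
  shows "let H = (\<lambda>t. Hm k U (X t));
             Psi = (\<lambda>t. Psim k U (Xi t) (X t));
             E = (\<lambda>t. Em k U lam (Xi t) (X t));
             C = Cm k lam \<beta> E;
             Lr = Lam_rest d k lam
         in (\<forall>t\<ge>1. H (t + 1) * C (t + 1)
                    = Lr * H t * C t - \<beta> \<cdot>\<^sub>m (H (t - 1) * C (t - 1)) + Psi t * C t)
            \<and> H 1 * C 1 = (1/2) \<cdot>\<^sub>m (Lr * H 0 * C 0) + Psi 0 * C 0"
  proof -
  have loc: "anpm d k \<beta> A U lam X R Xi"
  proof (rule anpm.intro)
    show "X 0 \<in> stiefel d k" "cos (theta (Ufirst k U) (X 0)) > 0" using X0 init by auto
  qed (use dk A U eig lam_sorted beta Xi_dim step1 step pert2 in auto)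
  interpret a: anpm d k \<beta> A U lam X R Xi by (rule loc)
  show ?thesis unfolding Let_def a.E_fun[symmetric] using a.final_step a.final0 by auto
qed

end
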